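(* A finite simple graph $G$ is $(2,2)$-tight if and only if it can be obtained from $K_1$ by sequential application of moves of four types, namely the Henneberg 1 move, the Henneberg 2 move, the vertex-to-$K_4$ move and the vertex-to-$4$-cycle move.
   Context: A graph $G=(V,E)$ is $(2,k)$-sparse if every subgraph $H$ with at least one edge satisfies $|E(H)|\le 2|V(H)|-k$, and $(2,k)$-tight if it is $(2,k)$-sparse and $|E|=2|V|-k$. Moves on a simple graph $G$: Henneberg 1: add a new vertex $v$ and two edges $vv_1,vv_2$ to distinct existing vertices $v_1,v_2$. Henneberg 2: remove an edge $v_1v_2$ and add a new vertex $v$ with edges $vv_1,vv_2,vv_3$ to distinct vertices $v_1,v_2,v_3$ for some existing $v_3$. Vertex-to-$K_4$: replace a vertex $v$ by a copy of $K_4$ on four new vertices, each edge $xv$ being replaced by an edge $xw$ for some (arbitrarily chosen) vertex $w$ of the $K_4$. Vertex-to-$4$-cycle: for a vertex $v_1$ with distinct neighbours $v_2,v_3$, add a new vertex $v_0$ and edges $v_0v_2,v_0v_3$, and replace each other edge $xv_1$ ($x\ne v_2,v_3$) either by keeping it or by replacing it with $xv_0$. *)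

theory Defs
  imports Main
begin

definition simple_graph :: "'a set \<Rightarrow> 'a set set \<Rightarrow> bool" where
  "simple_graph V E \<longleftrightarrow> finite V \<and> (\<forall>e\<in>E. e \<subseteq> V \<and> card e = 2)"

definition sparse :: "nat \<Rightarrow> int \<Rightarrow> 'a set \<Rightarrow> 'a set set \<Rightarrow> bool" where
  "sparse a k V E \<longleftrightarrow>
     (\<forall>V' E'. V' \<subseteq> V \<and> E' \<subseteq> E \<and> (\<forall>e\<in>E'. e \<subseteq> V') \<and> E' \<noteq> {}
        \<longrightarrow> int (card E') \<le> int a * int (card V') - k)"

definition tight :: "nat \<Rightarrow> int \<Rightarrow> 'a set \<Rightarrow> 'a set set \<Rightarrow> bool" where
  "tight a k V E \<longleftrightarrow> sparse a k V E \<and> int (card E) = int a * int (card V) - k"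

definition nbrs :: "'a set set \<Rightarrow> 'a \<Rightarrow> 'a set" where
  "nbrs E v = {x. {x, v} \<in> E}"

inductive constructible :: "'a set \<Rightarrow> 'a set set \<Rightarrow> bool" where
  K1: "constructible {v} {}"
| henneberg1:
    "\<lbrakk> constructible V E; v \<notin> V; v1 \<in> V; v2 \<in> V; v1 \<noteq> v2 \<rbrakk>
     \<Longrightarrow> constructible (insert v V) (E \<union> {{v, v1}, {v, v2}})"
| henneberg2:
    "\<lbrakk> constructible V E; v \<notin> V; {v1, v2} \<in> E; v3 \<in> V;
       v1 \<noteq> v2; v1 \<noteq> v3; v2 \<noteq> v3 \<rbrakk>
     \<Longrightarrow> constructible (insert v V) ((E - {{v1, v2}}) \<union> {{v, v1}, {v, v2}, {v, v3}})"
| vertex_to_K4: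
    "\<lbrakk> constructible V E; v \<in> V; W \<inter> V = {}; card W = 4;
       \<forall>x\<in>nbrs E v. f x \<in> W \<rbrakk>
     \<Longrightarrow> constructible ((V - {v}) \<union> W)
           ({e\<in>E. v \<notin> e} \<union> {{w, w'} | w w'. w \<in> W \<and> w' \<in> W \<and> w \<noteq> w'}
              \<union> {{x, f x} | x. x \<in> nbrs E v})"
| vertex_to_4cycle:
    "\<lbrakk> constructible V E; v1 \<in> V; v2 \<in> nbrs E v1; v3 \<in> nbrs E v1; v2 \<noteq> v3;
       v0 \<notin> V; S \<subseteq> nbrs E v1 - {v2, v3} \<rbrakk>
     \<Longrightarrow> constructible (insert v0 V)
           ((E - {{x, v1} | x. x \<in> S}) \<union> {{x, v0} | x. x \<in> S} \<union> {{v0, v2}, {v0, v3}})"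

end

theory Submission
  imports Defs
begin


definition ind :: "'a set set \<Rightarrow> 'a set \<Rightarrow> 'a set set" where
  "ind E X = {e\<in>E. e \<subseteq> X}"

definition sp :: "'a set \<Rightarrow> 'a set set \<Rightarrow> bool" where
  "sp V E \<longleftrightarrow> (\<forall>X. X \<subseteq> V \<and> X \<noteq> {} \<longrightarrow> int (card (ind E X)) \<le> 2 * int (card X) - 2)"

lemma sg_finE: "simple_graph V E \<Longrightarrow> finite E"
  unfolding simple_graph_def
  by (meson PowI finite_Pow_iff rev_finite_subset subsetI)

lemma sg_fin_ind: "simple_graph V E \<Longrightarrow> finite (ind E X)"
  unfolding ind_def by (rule finite_subset[of _ E]) (auto dest: sg_finE)

lemma sg_edge: "simple_graph V E \<Longrightarrow> e \<in> E \<Longrightarrow> \<exists>x y. e = {x,y} \<and> x \<noteq> y \<and> x \<in> V \<and> y \<in> V"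
  unfolding simple_graph_def by (metis card_2_iff insert_subset)

lemma sp_iff: assumes "simple_graph V E" shows "sparse 2 2 V E \<longleftrightarrow> sp V E"
proof
  assume s: "sparse 2 2 V E"
  show "sp V E" unfolding sp_def
  proof (intro allI impI)
    fix X assume X: "X \<subseteq> V \<and> X \<noteq> {}"
    have fX: "finite X" using X assms unfolding simple_graph_def by (meson finite_subset)
    hence "card X \<ge> 1" using X by (simp add: Suc_leI card_gt_0_iff)
    show "int (card (ind E X)) \<le> 2 * int (card X) - 2"
    proof (cases "ind E X = {}")
      case True thus ?thesis using \<open>card X \<ge> 1\<close> by simp
    next
      case False
      have "int (card (ind E X)) \<le> int 2 * int (card X) - 2"
        using s X False unfolding sparse_def ind_def by (smt (verit, ccfv_SIG) mem_Collect_eq subset_iff)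
      thus ?thesis by simp
    qed
  qed
next
  assume s: "sp V E"
  show "sparse 2 2 V E" unfolding sparse_def
  proof (intro allI impI)
    fix V' E' assume h: "V' \<subseteq> V \<and> E' \<subseteq> E \<and> (\<forall>e\<in>E'. e \<subseteq> V') \<and> E' \<noteq> {}"
    then obtain e where e: "e \<in> E'" by blast
    then obtain x y where "e = {x,y}" "x \<in> V'" using h assms sg_edge by (metis insert_subset subsetD)
    hence ne: "V' \<noteq> {}" by blast
    have "E' \<subseteq> ind E V'" using h unfolding ind_def by auto
    hence "card E' \<le> card (ind E V')" using sg_fin_ind[OF assms] card_mono by blast
    moreover have "int (card (ind E V')) \<le> 2 * int (card V') - 2" using s h ne unfolding sp_def by blast
    ultimately show "int (card E') \<le> int 2 * int (card V') - 2" by simp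
  qed
qed

lemma tight_iff: assumes "simple_graph V E"
  shows "tight 2 2 V E \<longleftrightarrow> sp V E \<and> int (card E) = 2 * int (card V) - 2"
  using sp_iff[OF assms] unfolding tight_def by simp

lemma ind_mono: "X \<subseteq> Y \<Longrightarrow> ind E X \<subseteq> ind E Y" unfolding ind_def by auto

lemma ind_V: "simple_graph V E \<Longrightarrow> ind E V = E"
  unfolding ind_def simple_graph_def by auto

lemma add_vertex:
  assumes sg: "simple_graph V E" and w: "w \<notin> X" and N: "N \<subseteq> X" and fN: "finite N"
    and adj: "\<forall>y\<in>N. {w,y} \<in> E"
  shows "card (ind E X) + card N \<le> card (ind E (insert w X))"
proof -
  have inj: "inj_on (\<lambda>y. {w,y}) N" unfolding inj_on_def using w N
    by (metis doubleton_eq_iff subsetD)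
  have sub: "ind E X \<union> (\<lambda>y. {w,y}) ` N \<subseteq> ind E (insert w X)"
    using adj N unfolding ind_def by auto
  have dis: "ind E X \<inter> (\<lambda>y. {w,y}) ` N = {}" using w unfolding ind_def by auto
  have "card (ind E X \<union> (\<lambda>y. {w,y}) ` N) = card (ind E X) + card N"
    using card_Un_disjoint[OF sg_fin_ind[OF sg] _ dis] fN card_image[OF inj] by simp
  thus ?thesis using card_mono[OF sg_fin_ind[OF sg] sub] by simp
qed

lemma violate:
  assumes "sp V E" "X \<subseteq> V" "X \<noteq> {}" "int (card (ind E X)) > 2 * int (card X) - 2"
  shows False
proof -
  have "int (card (ind E X)) \<le> 2 * int (card X) - 2" using assms(1-3) unfolding sp_def by blast
  thus False using assms(4) by simp
qed

lemma union_tight: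
  assumes sg: "simple_graph V E" and s: "sp V E" and X: "X \<subseteq> V" and Y: "Y \<subseteq> V"
    and int: "X \<inter> Y \<noteq> {}"
    and tX: "int (card (ind E X)) = 2 * int (card X) - 2"
    and tY: "int (card (ind E Y)) = 2 * int (card Y) - 2"
  shows "int (card (ind E (X \<union> Y))) \<ge> 2 * int (card (X \<union> Y)) - 2"
proof -
  have fV: "finite V" using sg simple_graph_def by auto
  have fX: "finite X" "finite Y" using X Y fV finite_subset by auto
  have "ind E X \<union> ind E Y \<subseteq> ind E (X \<union> Y)" unfolding ind_def by auto
  hence a: "card (ind E X \<union> ind E Y) \<le> card (ind E (X \<union> Y))"
    using card_mono sg_fin_ind[OF sg] by blast
  have b: "ind E X \<inter> ind E Y = ind E (X \<inter> Y)" unfolding ind_def by auto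
  have c: "card (ind E X \<union> ind E Y) + card (ind E X \<inter> ind E Y) = card (ind E X) + card (ind E Y)"
    using card_Un_Int[OF sg_fin_ind[OF sg] sg_fin_ind[OF sg], of X Y] by simp
  have XY: "X \<inter> Y \<subseteq> V" using X by auto
  have d: "int (card (ind E (X \<inter> Y))) \<le> 2 * int (card (X \<inter> Y)) - 2"
    using s XY int unfolding sp_def by blast
  have e: "card (X \<union> Y) + card (X \<inter> Y) = card X + card Y" using card_Un_Int[OF fX] by simp
  have c': "int (card (ind E X \<union> ind E Y)) + int (card (ind E (X \<inter> Y))) = int (card (ind E X)) + int (card (ind E Y))"
    using b c by (metis of_nat_add)
  have e': "int (card (X \<union> Y)) + int (card (X \<inter> Y)) = int (card X) + int (card Y)"
    using e by (metis of_nat_add)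
  have a': "int (card (ind E X \<union> ind E Y)) \<le> int (card (ind E (X \<union> Y)))" using a by simp
  show ?thesis using a' c' d e' tX tY by linarith
qed



lemma sp_le: "sp V E \<Longrightarrow> X \<subseteq> V \<Longrightarrow> X \<noteq> {} \<Longrightarrow> int (card (ind E X)) \<le> 2 * int (card X) - 2"
  unfolding sp_def by blast

lemma ind_single: "simple_graph V E \<Longrightarrow> ind E {v} = {}"
  unfolding ind_def simple_graph_def
  by (auto dest!: subset_singletonD)

lemma nbrs_V: "simple_graph V E \<Longrightarrow> nbrs E v \<subseteq> V"
  unfolding nbrs_def simple_graph_def by auto

lemma nbrs_not_self: "simple_graph V E \<Longrightarrow> v \<notin> nbrs E v"
  unfolding nbrs_def simple_graph_def by force

lemma edges_at: assumes "simple_graph V E"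
  shows "{e\<in>E. v \<in> e} = (\<lambda>x. {v,x}) ` nbrs E v"
proof
  show "{e \<in> E. v \<in> e} \<subseteq> (\<lambda>x. {v, x}) ` nbrs E v"
  proof
    fix e assume e: "e \<in> {e \<in> E. v \<in> e}"
    then obtain x y where "e = {x,y}" "x \<noteq> y" using sg_edge[OF assms] by blast
    thus "e \<in> (\<lambda>x. {v, x}) ` nbrs E v" using e unfolding nbrs_def
      by (auto simp: insert_commute)
  qed
  show "(\<lambda>x. {v, x}) ` nbrs E v \<subseteq> {e \<in> E. v \<in> e}"
    unfolding nbrs_def by (auto simp: insert_commute)
qed

lemma inj_at: "v \<notin> N \<Longrightarrow> inj_on (\<lambda>x. {v,x}) N"
  unfolding inj_on_def by (metis doubleton_eq_iff)

lemma inj_at2: "w \<notin> N \<Longrightarrow> inj_on (\<lambda>x. {x,w}) N"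
  unfolding inj_on_def by (metis doubleton_eq_iff)

lemma card_split_at: assumes sg: "simple_graph V E"
  shows "card E = card {e\<in>E. v \<notin> e} + card (nbrs E v)"
proof -
  have fV: "finite V" using sg unfolding simple_graph_def by blast
  have fN: "finite (nbrs E v)" by (rule finite_subset[OF nbrs_V[OF sg] fV])
  have eq: "E = {e\<in>E. v \<notin> e} \<union> {e\<in>E. v \<in> e}" by auto
  have f1: "finite {e\<in>E. v \<notin> e}" "finite {e\<in>E. v \<in> e}" using sg_finE[OF sg] by auto
  have "card ({e\<in>E. v \<notin> e} \<union> {e\<in>E. v \<in> e}) = card {e\<in>E. v \<notin> e} + card {e\<in>E. v \<in> e}"
    by (rule card_Un_disjoint[OF f1]) auto
  moreover have "card E = card ({e\<in>E. v \<notin> e} \<union> {e\<in>E. v \<in> e})" using eq by (rule arg_cong)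
  ultimately have "card E = card {e\<in>E. v \<notin> e} + card {e\<in>E. v \<in> e}" by simp
  also have "card {e\<in>E. v \<in> e} = card (nbrs E v)"
    using edges_at[OF sg] card_image[OF inj_at[OF nbrs_not_self[OF sg]]] by simp
  finally show ?thesis .
qed

lemma ind_notin: "v \<notin> X \<Longrightarrow> (\<forall>e\<in>F. v \<in> e) \<Longrightarrow> ind (E \<union> F) X = ind E X"
  unfolding ind_def by auto

lemma K1_ok: "simple_graph {v} {} \<and> sp {v} {} \<and> int (card ({}::'a set set)) = 2 * int (card {v}) - 2"
  unfolding simple_graph_def sp_def ind_def by (auto simp: subset_singleton_iff)

lemma X_split: assumes "X \<subseteq> insert v V" "v \<in> X" shows "X = insert v (X - {v})" "X - {v} \<subseteq> V"
  using assms by auto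

lemma H1_ok:
  assumes sg: "simple_graph V E" and s: "sp V E" and c: "int (card E) = 2 * int (card V) - 2"
    and v: "v \<notin> V" and v1: "v1 \<in> V" and v2: "v2 \<in> V" and ne: "v1 \<noteq> v2"
  defines "E' \<equiv> E \<union> {{v, v1}, {v, v2}}"
  shows "simple_graph (insert v V) E' \<and> sp (insert v V) E' \<and> int (card E') = 2 * int (card (insert v V)) - 2"
proof -
  have fV: "finite V" using sg simple_graph_def by auto
  have v12: "v \<noteq> v1" "v \<noteq> v2" using v v1 v2 by auto
  have sg': "simple_graph (insert v V) E'" using sg v1 v2 v12 unfolding E'_def simple_graph_def by auto
  have F: "\<forall>e\<in>{{v, v1}, {v, v2}}. v \<in> e" by auto
  have sp': "sp (insert v V) E'" unfolding sp_def
  proof (intro allI impI)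
    fix X assume X: "X \<subseteq> insert v V \<and> X \<noteq> {}"
    show "int (card (ind E' X)) \<le> 2 * int (card X) - 2"
    proof (cases "v \<in> X")
      case False
      hence "X \<subseteq> V" using X by auto
      thus ?thesis using s X ind_notin[OF False F, of E] unfolding E'_def sp_def by auto
    next
      case True
      define X0 where "X0 = X - {v}"
      have X0: "X = insert v X0" "X0 \<subseteq> V" "v \<notin> X0" using X True X0_def by auto
      have fX0: "finite X0" using X0 fV finite_subset by auto
      have sub: "ind E' X \<subseteq> ind E X0 \<union> {{v, v1}, {v, v2}}"
        unfolding E'_def ind_def using X0 sg v unfolding simple_graph_def by auto
      have "card (ind E' X) \<le> card (ind E X0) + 2"
      proof -
        have "card (ind E' X) \<le> card (ind E X0 \<union> {{v, v1}, {v, v2}})"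
          by (rule card_mono[OF _ sub]) (simp add: sg_fin_ind[OF sg])
        also have "\<dots> \<le> card (ind E X0) + card {{v, v1}, {v, v2}}" by (rule card_Un_le)
        also have "card {{v, v1}, {v, v2}} \<le> 2" by (simp add: card_insert_le_m1)
        finally show ?thesis by simp
      qed
      moreover have "card X = card X0 + 1" using X0 fX0 by simp
      moreover have "X0 = {} \<Longrightarrow> ind E' X = {}"
        using ind_single[OF sg'] X0 by simp
      moreover have "X0 \<noteq> {} \<Longrightarrow> int (card (ind E X0)) \<le> 2 * int (card X0) - 2"
        using s X0 unfolding sp_def by auto
      ultimately show ?thesis by (cases "X0 = {}") auto
    qed
  qed
  have "{v, v1} \<noteq> {v, v2}" using ne by (simp add: doubleton_eq_iff)
  hence c2: "card {{v, v1}, {v, v2}} = 2" by simp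
  have "E \<inter> {{v, v1}, {v, v2}} = {}" using sg v unfolding simple_graph_def by auto
  hence "card E' = card E + 2" unfolding E'_def
    using card_Un_disjoint[OF sg_finE[OF sg], of "{{v, v1}, {v, v2}}"] c2 by simp
  moreover have "card (insert v V) = card V + 1" using fV v by simp
  ultimately show ?thesis using sg' sp' c by simp
qed

lemma card2: "card {a, b} \<le> 2" by (cases "a = b") auto
lemma card3: "card {a, b, c} \<le> 3" by (cases "a = b"; cases "a = c"; cases "b = c") (auto simp: card_insert_if)

lemma H2_ok:
  assumes sg: "simple_graph V E" and s: "sp V E" and c: "int (card E) = 2 * int (card V) - 2"
    and v: "v \<notin> V" and e12: "{v1, v2} \<in> E" and v3: "v3 \<in> V"
    and n12: "v1 \<noteq> v2" and n13: "v1 \<noteq> v3" and n23: "v2 \<noteq> v3"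
  defines "E' \<equiv> (E - {{v1, v2}}) \<union> {{v, v1}, {v, v2}, {v, v3}}"
  shows "simple_graph (insert v V) E' \<and> sp (insert v V) E' \<and> int (card E') = 2 * int (card (insert v V)) - 2"
proof -
  have fV: "finite V" using sg simple_graph_def by auto
  have v1: "v1 \<in> V" and v2: "v2 \<in> V" using e12 sg unfolding simple_graph_def by auto
  have v12: "v \<noteq> v1" "v \<noteq> v2" "v \<noteq> v3" using v v1 v2 v3 by auto
  have sg': "simple_graph (insert v V) E'" using sg v1 v2 v3 v12 unfolding E'_def simple_graph_def by auto
  define F where "F = {{v, v1}, {v, v2}, {v, v3}}"
  have F: "\<forall>e\<in>F. v \<in> e" unfolding F_def by auto
  have sp': "sp (insert v V) E'" unfolding sp_def
  proof (intro allI impI)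
    fix X assume X: "X \<subseteq> insert v V \<and> X \<noteq> {}"
    show "int (card (ind E' X)) \<le> 2 * int (card X) - 2"
    proof (cases "v \<in> X")
      case False
      hence XV: "X \<subseteq> V" using X by auto
      have "ind E' X \<subseteq> ind E X" unfolding E'_def ind_def using False by auto
      hence "card (ind E' X) \<le> card (ind E X)" by (rule card_mono[OF sg_fin_ind[OF sg]])
      thus ?thesis using sp_le[OF s XV] X by linarith
    next
      case True
      define X0 where "X0 = X - {v}"
      have X0: "X = insert v X0" "X0 \<subseteq> V" "v \<notin> X0" using X True X0_def by auto
      have fX0: "finite X0" using X0 fV finite_subset by auto
      define B where "B = {v1, v2, v3} \<inter> X0"
      have sub: "ind E' X \<subseteq> (ind E X0 - {{v1, v2}}) \<union> (\<lambda>y. {v, y}) ` B"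
      proof
        fix e assume e: "e \<in> ind E' X"
        show "e \<in> (ind E X0 - {{v1, v2}}) \<union> (\<lambda>y. {v, y}) ` B"
        proof (cases "e \<in> E")
          case True
          hence "e \<subseteq> V" using sg unfolding simple_graph_def by auto
          thus ?thesis using e True X0 v unfolding ind_def E'_def by auto
        next
          case False
          hence "e \<in> F" using e unfolding ind_def E'_def F_def by auto
          thus ?thesis using e X0 v12 unfolding F_def B_def ind_def by auto
        qed
      qed
      have fin1: "finite (ind E X0 - {{v1, v2}})" using sg_fin_ind[OF sg] by auto
      have "card (ind E' X) \<le> card ((ind E X0 - {{v1, v2}}) \<union> (\<lambda>y. {v, y}) ` B)"
        by (rule card_mono[OF _ sub]) (simp add: sg_fin_ind[OF sg] B_def)
      also have "\<dots> \<le> card (ind E X0 - {{v1, v2}}) + card ((\<lambda>y. {v, y}) ` B)" by (rule card_Un_le)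
      also have "card ((\<lambda>y. {v, y}) ` B) \<le> card B" by (rule card_image_le) (simp add: B_def)
      finally have cb: "card (ind E' X) \<le> card (ind E X0 - {{v1, v2}}) + card B" by simp
      have key: "card (ind E' X) \<le> card (ind E X0) + 2"
      proof (cases "v1 \<in> X0 \<and> v2 \<in> X0")
        case True
        hence "{v1, v2} \<in> ind E X0" using e12 unfolding ind_def by auto
        hence "card (ind E X0 - {{v1, v2}}) = card (ind E X0) - 1"
          using sg_fin_ind[OF sg, of X0] by simp
        moreover have "card (ind E X0) \<ge> 1" using \<open>{v1, v2} \<in> ind E X0\<close> sg_fin_ind[OF sg]
          by (metis One_nat_def Suc_leI card_gt_0_iff empty_iff)
        moreover have "card B \<le> 3"
        proof -
          have "card B \<le> card {v1, v2, v3}" unfolding B_def by (rule card_mono) auto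
          thus ?thesis using card3[of v1 v2 v3] by linarith
        qed
        ultimately show ?thesis using cb by linarith
      next
        case False
        hence "B \<subseteq> {v2, v3} \<or> B \<subseteq> {v1, v3}" unfolding B_def by auto
        hence "card B \<le> 2"
        proof
          assume "B \<subseteq> {v2, v3}" hence "card B \<le> card {v2, v3}" by (rule card_mono[rotated]) auto
          thus ?thesis using card2[of v2 v3] by linarith
        next
          assume "B \<subseteq> {v1, v3}" hence "card B \<le> card {v1, v3}" by (rule card_mono[rotated]) auto
          thus ?thesis using card2[of v1 v3] by linarith
        qed
        moreover have "card (ind E X0 - {{v1, v2}}) \<le> card (ind E X0)"
          by (rule card_mono[OF sg_fin_ind[OF sg]]) auto
        ultimately show ?thesis using cb by linarith
      qed
      moreover have "card X = card X0 + 1" using X0 fX0 by simp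
      moreover have "X0 = {} \<Longrightarrow> ind E' X = {}"
        using ind_single[OF sg'] X0 by simp
      moreover have "X0 \<noteq> {} \<Longrightarrow> int (card (ind E X0)) \<le> 2 * int (card X0) - 2"
        using s X0 unfolding sp_def by auto
      ultimately show ?thesis by (cases "X0 = {}") auto
    qed
  qed
  have "card F = 3" unfolding F_def using n12 n13 n23 by (simp add: doubleton_eq_iff)
  have "(E - {{v1, v2}}) \<inter> F = {}" using sg v unfolding simple_graph_def F_def by auto
  hence "card E' = card (E - {{v1, v2}}) + 3" unfolding E'_def
    using card_Un_disjoint[of "E - {{v1, v2}}" F] sg_finE[OF sg] \<open>card F = 3\<close> unfolding F_def by simp
  moreover have "card (E - {{v1, v2}}) + 1 = card E" using e12 sg_finE[OF sg]
    by (metis card_Diff1_le card_Diff_singleton_if card_gt_0_iff empty_iff le_add_diff_inverse2 One_nat_def Suc_leI)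
  moreover have "card (insert v V) = card V + 1" using fV v by simp
  ultimately show ?thesis using sg' sp' c by simp
qed

lemma pairs_eq: "{{w, w'} | w w'. w \<in> W \<and> w' \<in> W \<and> w \<noteq> w'} = {e. e \<subseteq> W \<and> card e = 2}"
  by (auto simp: card_2_iff)

lemma choose2_le: "1 \<le> k \<Longrightarrow> k \<le> 4 \<Longrightarrow> int (k choose 2) \<le> 2 * int k - 2"
proof -
  assume "1 \<le> k" "k \<le> 4"
  hence "k = 1 \<or> k = 2 \<or> k = 3 \<or> k = 4" by auto
  thus ?thesis by (auto simp: numeral_eq_Suc)
qed

lemma K4_ok:
  assumes sg: "simple_graph V E" and s: "sp V E" and c: "int (card E) = 2 * int (card V) - 2"
    and v: "v \<in> V" and W: "W \<inter> V = {}" and cW: "card W = 4"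
    and f: "\<forall>x\<in>nbrs E v. f x \<in> W"
  defines "V' \<equiv> (V - {v}) \<union> W"
    and "E' \<equiv> {e\<in>E. v \<notin> e} \<union> {{w, w'} | w w'. w \<in> W \<and> w' \<in> W \<and> w \<noteq> w'}
              \<union> {{x, f x} | x. x \<in> nbrs E v}"
  shows "simple_graph V' E' \<and> sp V' E' \<and> int (card E') = 2 * int (card V') - 2"
proof -
  define N where "N = nbrs E v"
  define E1 where "E1 = {e\<in>E. v \<notin> e}"
  define P where "P = {e. e \<subseteq> W \<and> card e = 2}"
  define C where "C = (\<lambda>x. {x, f x}) ` N"
  have E'eq: "E' = E1 \<union> P \<union> C" unfolding E'_def E1_def P_def C_def N_def pairs_eq by auto
  have fV: "finite V" using sg simple_graph_def by auto
  have fW: "finite W" using cW by (metis card.infinite zero_neq_numeral)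
  have NV: "N \<subseteq> V" "v \<notin> N" using nbrs_V[OF sg] nbrs_not_self[OF sg] N_def by auto
  have fN: "finite N" using NV fV finite_subset by auto
  have fNW: "\<forall>x\<in>N. f x \<in> W" using f N_def by auto
  have sg': "simple_graph V' E'"
    unfolding simple_graph_def
  proof (rule conjI[OF _ ballI])
    show "finite V'" unfolding V'_def using fV fW by auto
    fix e assume "e \<in> E'"
    hence "e \<in> E1 \<or> e \<in> P \<or> e \<in> C" unfolding E'eq by auto
    thus "e \<subseteq> V' \<and> card e = 2"
    proof (elim disjE)
      assume "e \<in> E1" thus ?thesis using sg unfolding E1_def V'_def simple_graph_def by auto
    next
      assume "e \<in> P" thus ?thesis unfolding P_def V'_def by auto
    next
      assume "e \<in> C"
      then obtain x where x: "x \<in> N" "e = {x, f x}" unfolding C_def by auto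
      have "x \<in> V" "f x \<in> W" using x fNW NV by auto
      hence "x \<noteq> f x" using W by (metis IntI empty_iff)
      moreover have "x \<in> V - {v}" using x NV by auto
      ultimately show ?thesis using x(2) \<open>f x \<in> W\<close> unfolding V'_def by auto
    qed
  qed
  have injC: "inj_on (\<lambda>x. {x, f x}) N"
    unfolding inj_on_def
  proof (intro ballI impI)
    fix x y assume xy: "x \<in> N" "y \<in> N" "{x, f x} = {y, f y}"
    have "x \<notin> W" "y \<notin> W" using xy NV W by auto
    thus "x = y" using xy fNW by (metis doubleton_eq_iff)
  qed
  have sp': "sp V' E'" unfolding sp_def
  proof (intro allI impI)
    fix X assume X: "X \<subseteq> V' \<and> X \<noteq> {}"
    define X0 where "X0 = X - W"
    define XW where "XW = X \<inter> W"
    have X0V: "X0 \<subseteq> V" "v \<notin> X0" using X unfolding X0_def V'_def by auto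
    have fX0: "finite X0" using X0V fV finite_subset by auto
    have fXW: "finite XW" using fW XW_def by auto
    have Xeq: "X = X0 \<union> XW" "X0 \<inter> XW = {}" unfolding X0_def XW_def by auto
    have cX: "card X = card X0 + card XW" using Xeq fX0 fXW card_Un_disjoint by metis
    define M where "M = {x\<in>N \<inter> X0. f x \<in> XW}"
    have sub: "ind E' X \<subseteq> ind E X0 \<union> {e. e \<subseteq> XW \<and> card e = 2} \<union> (\<lambda>x. {x, f x}) ` M"
    proof
      fix e assume e: "e \<in> ind E' X"
      hence eX: "e \<subseteq> X" and "e \<in> E1 \<or> e \<in> P \<or> e \<in> C" unfolding ind_def E'eq by auto
      thus "e \<in> ind E X0 \<union> {e. e \<subseteq> XW \<and> card e = 2} \<union> (\<lambda>x. {x, f x}) ` M"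
      proof (elim disjE)
        assume "e \<in> E1"
        hence "e \<in> E" "e \<subseteq> V" using sg unfolding E1_def simple_graph_def by auto
        thus ?thesis using eX W unfolding ind_def X0_def by auto
      next
        assume "e \<in> P" thus ?thesis using eX unfolding P_def XW_def by auto
      next
        assume "e \<in> C"
        then obtain x where x: "x \<in> N" "e = {x, f x}" unfolding C_def by auto
        have "x \<notin> W" using x NV W by auto
        hence "x \<in> X0" "f x \<in> XW" using x eX fNW unfolding X0_def XW_def by auto
        thus ?thesis using x unfolding M_def by auto
      qed
    qed
    have fM: "finite M" using fN M_def by auto
    have cM: "card ((\<lambda>x. {x, f x}) ` M) \<le> card M" by (rule card_image_le[OF fM])
    have cP: "card {e. e \<subseteq> XW \<and> card e = 2} = card XW choose 2" by (rule n_subsets[OF fXW])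
    have "card (ind E' X) \<le> card (ind E X0 \<union> {e. e \<subseteq> XW \<and> card e = 2} \<union> (\<lambda>x. {x, f x}) ` M)"
      by (rule card_mono[OF _ sub]) (simp add: sg_fin_ind[OF sg] fM fXW)
    also have "\<dots> \<le> card (ind E X0 \<union> {e. e \<subseteq> XW \<and> card e = 2}) + card ((\<lambda>x. {x, f x}) ` M)"
      by (rule card_Un_le)
    also have "card (ind E X0 \<union> {e. e \<subseteq> XW \<and> card e = 2}) \<le> card (ind E X0) + card {e. e \<subseteq> XW \<and> card e = 2}"
      by (rule card_Un_le)
    finally have cb: "card (ind E' X) \<le> card (ind E X0) + (card XW choose 2) + card M" using cM cP by linarith
    show "int (card (ind E' X)) \<le> 2 * int (card X) - 2"
    proof (cases "XW = {}")
      case True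
      hence "M = {}" unfolding M_def by auto
      moreover have "X0 \<noteq> {}" using X True Xeq by auto
      ultimately show ?thesis using cb True sp_le[OF s X0V(1)] cX by (simp add: binomial_eq_0)
    next
      case False
      have MX: "M \<subseteq> X0" "\<forall>y\<in>M. {v, y} \<in> E" unfolding M_def N_def nbrs_def by (auto simp: insert_commute)
      have "card (ind E X0) + card M \<le> card (ind E (insert v X0))"
        by (rule add_vertex[OF sg X0V(2) MX(1) fM MX(2)])
      moreover have "int (card (ind E (insert v X0))) \<le> 2 * int (card (insert v X0)) - 2"
        by (rule sp_le[OF s]) (use X0V v in auto)
      moreover have "card (insert v X0) = card X0 + 1" using X0V fX0 by simp
      moreover have "int (card XW choose 2) \<le> 2 * int (card XW) - 2"
      proof (rule choose2_le)
        show "1 \<le> card XW" using False fXW by (simp add: Suc_leI card_gt_0_iff)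
        show "card XW \<le> 4" using cW fW card_mono XW_def by (metis inf_le2)
      qed
      ultimately show ?thesis using cb cX by linarith
    qed
  qed
  have fE1: "finite E1" using sg_finE[OF sg] E1_def by auto
  have fP: "finite P" unfolding P_def using fW by auto
  have cP: "card P = 6" unfolding P_def using n_subsets[OF fW, of 2] cW by (simp add: numeral_eq_Suc)
  have cC: "card C = card N" unfolding C_def by (rule card_image[OF injC])
  have d1: "E1 \<inter> P = {}"
  proof (rule ccontr)
    assume "E1 \<inter> P \<noteq> {}"
    then obtain e where e: "e \<in> E1" "e \<in> P" by blast
    hence "e \<subseteq> V" "e \<subseteq> W" "card e = 2" using sg unfolding E1_def P_def simple_graph_def by auto
    hence "e = {}" using W by blast
    thus False using \<open>card e = 2\<close> by simp
  qed
  have d2: "(E1 \<union> P) \<inter> C = {}"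
  proof -
    { fix x assume x: "x \<in> N"
      have "x \<notin> W" "f x \<notin> V" using x NV W fNW by auto
      hence "{x, f x} \<notin> E1" "{x, f x} \<notin> P" using sg unfolding E1_def P_def simple_graph_def by auto }
    thus ?thesis unfolding C_def by auto
  qed
  have "card E' = card E1 + 6 + card N"
    unfolding E'eq using card_Un_disjoint[OF fE1 fP d1] card_Un_disjoint[of "E1 \<union> P" C] d2 fE1 fP fN cP cC
    C_def by simp
  moreover have "card E = card E1 + card N" using card_split_at[OF sg] E1_def N_def by simp
  moreover have "card V' = card V - 1 + 4"
  proof -
    have "(V - {v}) \<inter> W = {}" using W by auto
    hence "card V' = card (V - {v}) + card W" unfolding V'_def
      by (intro card_Un_disjoint) (use fV fW in auto)
    moreover have "card (V - {v}) = card V - 1" using v fV by simp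
    ultimately show ?thesis using cW by simp
  qed
  moreover have "card V \<ge> 1" using v fV by (metis One_nat_def Suc_leI card_gt_0_iff empty_iff)
  ultimately show ?thesis using sg' sp' c by auto
qed

lemma C4_ok:
  assumes sg: "simple_graph V E" and s: "sp V E" and c: "int (card E) = 2 * int (card V) - 2"
    and v1: "v1 \<in> V" and v2: "v2 \<in> nbrs E v1" and v3: "v3 \<in> nbrs E v1" and n23: "v2 \<noteq> v3"
    and v0: "v0 \<notin> V" and S: "S \<subseteq> nbrs E v1 - {v2, v3}"
  defines "E' \<equiv> (E - {{x, v1} | x. x \<in> S}) \<union> {{x, v0} | x. x \<in> S} \<union> {{v0, v2}, {v0, v3}}"
  shows "simple_graph (insert v0 V) E' \<and> sp (insert v0 V) E' \<and> int (card E') = 2 * int (card (insert v0 V)) - 2"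
proof -
  define N where "N = nbrs E v1"
  define R where "R = (\<lambda>x. {x, v1}) ` S"
  define A where "A = (\<lambda>x. {x, v0}) ` S"
  define D where "D = {{v0, v2}, {v0, v3}}"
  have E'eq: "E' = (E - R) \<union> A \<union> D" unfolding E'_def R_def A_def D_def by auto
  have fV: "finite V" using sg simple_graph_def by auto
  have NV: "N \<subseteq> V" "v1 \<notin> N" using nbrs_V[OF sg] nbrs_not_self[OF sg] N_def by auto
  have SN: "S \<subseteq> N" "v2 \<notin> S" "v3 \<notin> S" using S N_def by auto
  have fS: "finite S" using SN NV fV finite_subset by metis
  have v23: "v2 \<in> N" "v3 \<in> N" using v2 v3 N_def by auto
  have v23V: "v2 \<in> V" "v3 \<in> V" using v23 NV by auto
  have SV: "S \<subseteq> V" using SN NV by auto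
  have v0n: "v0 \<noteq> v1" "v0 \<noteq> v2" "v0 \<noteq> v3" "v0 \<notin> S" using v1 v23V v0 SV by auto
  have adjN: "\<And>y. y \<in> N \<Longrightarrow> {v1, y} \<in> E" unfolding N_def nbrs_def by (auto simp: insert_commute)
  have Ev0: "\<And>e. e \<in> E \<Longrightarrow> v0 \<notin> e" using sg v0 unfolding simple_graph_def by auto
  have sg': "simple_graph (insert v0 V) E'"
    unfolding simple_graph_def
  proof (rule conjI[OF _ ballI])
    show "finite (insert v0 V)" using fV by simp
    fix e assume "e \<in> E'"
    hence "e \<in> E \<or> e \<in> A \<or> e \<in> D" unfolding E'eq by auto
    thus "e \<subseteq> insert v0 V \<and> card e = 2"
    proof (elim disjE)
      assume "e \<in> E" thus ?thesis using sg unfolding simple_graph_def by auto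
    next
      assume "e \<in> A"
      then obtain x where x: "x \<in> S" "e = {x, v0}" unfolding A_def by auto
      have "x \<noteq> v0" using x v0n by auto
      thus ?thesis using x SV by auto
    next
      assume "e \<in> D" thus ?thesis using v0n v23V unfolding D_def by auto
    qed
  qed
  have sp': "sp (insert v0 V) E'" unfolding sp_def
  proof (intro allI impI)
    fix X assume X: "X \<subseteq> insert v0 V \<and> X \<noteq> {}"
    show "int (card (ind E' X)) \<le> 2 * int (card X) - 2"
    proof (cases "v0 \<in> X")
      case False
      hence XV: "X \<subseteq> V" using X by auto
      have "ind E' X \<subseteq> ind E X" unfolding E'eq ind_def A_def D_def using False by auto
      hence "card (ind E' X) \<le> card (ind E X)" by (rule card_mono[OF sg_fin_ind[OF sg]])
      thus ?thesis using sp_le[OF s XV] X by linarith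
    next
      case True
      define X0 where "X0 = X - {v0}"
      have X0: "X = insert v0 X0" "X0 \<subseteq> V" "v0 \<notin> X0" using X True X0_def by auto
      have fX0: "finite X0" using X0 fV finite_subset by auto
      have cX: "card X = card X0 + 1" using X0 fX0 by simp
      have v0e: "\<And>e. e \<in> ind E' X \<Longrightarrow> v0 \<in> e \<Longrightarrow> \<exists>y. e = {y, v0} \<and> y \<in> X0 \<and> y \<in> N \<and> (y \<in> S \<or> y = v2 \<or> y = v3)"
      proof -
        fix e assume e: "e \<in> ind E' X" "v0 \<in> e"
        hence "e \<in> A \<or> e \<in> D" using Ev0 unfolding ind_def E'eq by auto
        then obtain y where y: "e = {y, v0}" "y \<in> S \<or> y = v2 \<or> y = v3"
          unfolding A_def D_def by (auto simp: insert_commute)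
        have "y \<in> N" using y SN v23 by auto
        moreover have "y \<noteq> v0" using y v0n by auto
        moreover have "y \<in> X" using e y unfolding ind_def by auto
        ultimately show "\<exists>y. e = {y, v0} \<and> y \<in> X0 \<and> y \<in> N \<and> (y \<in> S \<or> y = v2 \<or> y = v3)"
          using y X0_def by blast
      qed
      show ?thesis
      proof (cases "v1 \<in> X")
        case False
        define X1 where "X1 = insert v1 X0"
        have X1: "X1 \<subseteq> V" "X1 \<noteq> {}" using X0 v1 X1_def by auto
        have v1X0: "v1 \<notin> X0" using False X0_def by auto
        have cX1: "card X1 = card X0 + 1" using X1_def v1X0 fX0 by simp
        define \<psi> where "\<psi> = (\<lambda>e. if v0 \<in> e then insert v1 (e - {v0}) else e)"
        have img: "\<psi> ` ind E' X \<subseteq> ind E X1"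
        proof
          fix e' assume "e' \<in> \<psi> ` ind E' X"
          then obtain e where e: "e \<in> ind E' X" "e' = \<psi> e" by auto
          show "e' \<in> ind E X1"
          proof (cases "v0 \<in> e")
            case True
            then obtain y where y: "e = {y, v0}" "y \<in> X0" "y \<in> N" using v0e[OF e(1)] by blast
            have "y \<noteq> v0" using y X0 by auto
            hence "e' = {v1, y}" using e y True unfolding \<psi>_def by auto
            thus ?thesis using adjN[OF y(3)] y X1_def unfolding ind_def by auto
          next
            case False
            hence "e \<in> E" "e \<subseteq> X" using e unfolding ind_def E'eq A_def D_def by auto
            thus ?thesis using e False unfolding \<psi>_def ind_def X1_def X0_def by auto
          qed
        qed
        have inj: "inj_on \<psi> (ind E' X)"
        proof (rule inj_onI)
          fix e1 e2 assume e: "e1 \<in> ind E' X" "e2 \<in> ind E' X" "\<psi> e1 = \<psi> e2"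
          have nv1: "\<And>e. e \<in> ind E' X \<Longrightarrow> v1 \<notin> e" using False unfolding ind_def by auto
          show "e1 = e2"
          proof (cases "v0 \<in> e1"; cases "v0 \<in> e2")
            assume a: "v0 \<in> e1" "v0 \<in> e2"
            obtain y1 where y1: "e1 = {y1, v0}" "y1 \<in> X0" "y1 \<in> N" using v0e[OF e(1) a(1)] by blast
            obtain y2 where y2: "e2 = {y2, v0}" "y2 \<in> X0" "y2 \<in> N" using v0e[OF e(2) a(2)] by blast
            have "y1 \<noteq> v0" "y2 \<noteq> v0" "y1 \<noteq> v1" "y2 \<noteq> v1" using y1 y2 X0 NV by auto
            hence "\<psi> e1 = {v1, y1}" "\<psi> e2 = {v1, y2}" using y1 y2 unfolding \<psi>_def by auto
            hence "y1 = y2" using e(3) \<open>y1 \<noteq> v1\<close> \<open>y2 \<noteq> v1\<close> by (metis doubleton_eq_iff)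
            thus ?thesis using y1 y2 by simp
          next
            assume a: "v0 \<in> e1" "v0 \<notin> e2"
            hence "v1 \<in> \<psi> e1" "v1 \<notin> \<psi> e2" using nv1[OF e(2)] unfolding \<psi>_def by auto
            thus ?thesis using e(3) by simp
          next
            assume a: "v0 \<notin> e1" "v0 \<in> e2"
            hence "v1 \<notin> \<psi> e1" "v1 \<in> \<psi> e2" using nv1[OF e(1)] unfolding \<psi>_def by auto
            thus ?thesis using e(3) by simp
          next
            assume a: "v0 \<notin> e1" "v0 \<notin> e2"
            thus ?thesis using e(3) unfolding \<psi>_def by simp
          qed
        qed
        have "card (ind E' X) = card (\<psi> ` ind E' X)" using card_image[OF inj] by simp
        also have "\<dots> \<le> card (ind E X1)" by (rule card_mono[OF sg_fin_ind[OF sg] img])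
        finally show ?thesis using sp_le[OF s X1(1) X1(2)] cX cX1 by linarith
      next
        case True
        hence X0ne: "X0 \<noteq> {}" "v1 \<in> X0" using X0_def v0n by auto
        define R' where "R' = (\<lambda>x. {x, v1}) ` (S \<inter> X0)"
        define A' where "A' = (\<lambda>x. {x, v0}) ` (S \<inter> X0)"
        have sub: "ind E' X \<subseteq> (ind E X0 - R') \<union> A' \<union> D"
        proof
          fix e assume e: "e \<in> ind E' X"
          hence "e \<in> E - R \<or> e \<in> A \<or> e \<in> D" "e \<subseteq> X" unfolding ind_def E'eq by auto
          thus "e \<in> (ind E X0 - R') \<union> A' \<union> D"
          proof (elim disjE conjE)
            assume "e \<in> E - R" "e \<subseteq> X"
            moreover hence "v0 \<notin> e" using Ev0 by auto
            moreover have "R' \<subseteq> R" unfolding R'_def R_def by auto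
            ultimately show ?thesis unfolding ind_def X0_def by auto
          next
            assume "e \<in> A" "e \<subseteq> X"
            then obtain x where x: "x \<in> S" "e = {x, v0}" unfolding A_def by auto
            have "x \<in> X0" using x \<open>e \<subseteq> X\<close> v0n X0_def by auto
            thus ?thesis using x unfolding A'_def by auto
          qed auto
        qed
        have fSX: "finite (S \<inter> X0)" using fS by auto
        have R'sub: "R' \<subseteq> ind E X0" unfolding R'_def ind_def using X0ne SN adjN
          by (auto simp: insert_commute)
        have cR': "card R' = card (S \<inter> X0)" unfolding R'_def
          by (rule card_image, rule inj_at2) (use SN(1) NV(2) in auto)
        have cA': "card A' \<le> card (S \<inter> X0)" unfolding A'_def by (rule card_image_le[OF fSX])
        have cD: "card D \<le> 2" unfolding D_def by (rule card2)
        have "card (ind E' X) \<le> card ((ind E X0 - R') \<union> A' \<union> D)"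
          by (rule card_mono[OF _ sub]) (simp add: sg_fin_ind[OF sg] A'_def D_def fSX)
        also have "\<dots> \<le> card ((ind E X0 - R') \<union> A') + card D" by (rule card_Un_le)
        also have "card ((ind E X0 - R') \<union> A') \<le> card (ind E X0 - R') + card A'" by (rule card_Un_le)
        finally have cb: "card (ind E' X) \<le> card (ind E X0 - R') + card A' + card D" by simp
        have "card (ind E X0 - R') + card R' = card (ind E X0)"
          using card_Diff_subset[OF _ R'sub] card_mono[OF sg_fin_ind[OF sg] R'sub] sg_fin_ind[OF sg, of X0]
            finite_subset[OF R'sub] by simp
        thus ?thesis using cb cR' cA' cD sp_le[OF s X0(2) X0ne(1)] cX by linarith
      qed
    qed
  qed
  have fE: "finite E" by (rule sg_finE[OF sg])
  have RE: "R \<subseteq> E" unfolding R_def using SN adjN by (auto simp: insert_commute)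
  have cR: "card R = card S" unfolding R_def
    by (rule card_image, rule inj_at2) (use SN(1) NV(2) in auto)
  have cA: "card A = card S" unfolding A_def
    by (rule card_image, rule inj_at2) (use v0n(4) in auto)
  have cD: "card D = 2" unfolding D_def using n23 by (simp add: doubleton_eq_iff)
  have d1: "(E - R) \<inter> A = {}" unfolding A_def using Ev0 by auto
  have d2: "((E - R) \<union> A) \<inter> D = {}" unfolding A_def D_def using Ev0 SN by (auto simp: doubleton_eq_iff)
  have fA: "finite A" "finite D" unfolding A_def D_def using fS by auto
  have "card E' = card (E - R) + card A + card D" unfolding E'eq
    using card_Un_disjoint[OF _ fA(1) d1] card_Un_disjoint[OF _ fA(2) d2] fE fA by simp
  moreover have "card (E - R) + card R = card E"
    using card_Diff_subset[OF _ RE] card_mono[OF fE RE] finite_subset[OF RE fE] by simp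
  moreover have "card (insert v0 V) = card V + 1" using fV v0 by simp
  ultimately show ?thesis using sg' sp' c cR cA cD by simp
qed

lemma constr_ok: "constructible V E \<Longrightarrow> simple_graph V E \<and> sp V E \<and> int (card E) = 2 * int (card V) - 2"
proof (induction rule: constructible.induct)
  case (K1 v) show ?case by (rule K1_ok)
next
  case (henneberg1 V E v v1 v2) thus ?case using H1_ok[of V E v v1 v2] by blast
next
  case (henneberg2 V E v v1 v2 v3) thus ?case using H2_ok[of V E v v1 v2 v3] by blast
next
  case (vertex_to_K4 V E v W f) thus ?case using K4_ok[of V E v W f] by blast
next
  case (vertex_to_4cycle V E v1 v2 v3 v0 S) thus ?case using C4_ok[of V E v1 v2 v3 v0 S] by blast
qed



lemma deg_sum: assumes sg: "simple_graph V E"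
  shows "(\<Sum>u\<in>V. card (nbrs E u)) = 2 * card E"
proof -
  have fV: "finite V" and fE: "finite E" using sg sg_finE unfolding simple_graph_def by auto
  have "\<And>u. card (nbrs E u) = (\<Sum>e\<in>E. if u \<in> e then 1 else 0)"
  proof -
    fix u
    have "card (nbrs E u) = card {e\<in>E. u \<in> e}"
      using edges_at[OF sg] card_image[OF inj_at[OF nbrs_not_self[OF sg]]] by simp
    also have "\<dots> = (\<Sum>e\<in>{e\<in>E. u \<in> e}. 1)" by simp
    also have "\<dots> = (\<Sum>e\<in>E. if u \<in> e then 1 else 0)" by (rule sum.inter_filter[OF fE])
    finally show "card (nbrs E u) = (\<Sum>e\<in>E. if u \<in> e then 1 else 0)" .
  qed
  hence "(\<Sum>u\<in>V. card (nbrs E u)) = (\<Sum>u\<in>V. \<Sum>e\<in>E. if u \<in> e then 1 else 0)" by simp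
  also have "\<dots> = (\<Sum>e\<in>E. \<Sum>u\<in>V. if u \<in> e then 1 else 0)" by (rule sum.swap)
  also have "\<dots> = (\<Sum>e\<in>E. 2)"
  proof (rule sum.cong[OF refl])
    fix e assume e: "e \<in> E"
    have "(\<Sum>u\<in>V. if u \<in> e then 1 else 0) = (\<Sum>u\<in>{u\<in>V. u \<in> e}. 1::nat)"
      by (rule sum.inter_filter[OF fV, symmetric])
    also have "{u\<in>V. u \<in> e} = e" using e sg unfolding simple_graph_def by auto
    finally show "(\<Sum>u\<in>V. if u \<in> e then 1 else 0) = (2::nat)" using e sg unfolding simple_graph_def by simp
  qed
  finally show ?thesis by simp
qed

lemma sp_sub: assumes sg: "simple_graph V E" and s: "sp V E" and "V' \<subseteq> V" "E' \<subseteq> E"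
  shows "sp V' E'"
  unfolding sp_def
proof (intro allI impI)
  fix X assume X: "X \<subseteq> V' \<and> X \<noteq> {}"
  have "ind E' X \<subseteq> ind E X" using assms unfolding ind_def by auto
  hence "card (ind E' X) \<le> card (ind E X)" by (rule card_mono[OF sg_fin_ind[OF sg]])
  thus "int (card (ind E' X)) \<le> 2 * int (card X) - 2" using sp_le[OF s, of X] X assms by force
qed

locale red =
  fixes V :: "'a set" and E :: "'a set set"
  assumes sg: "simple_graph V E" and s: "sp V E" and c: "int (card E) = 2 * int (card V) - 2"
    and IH: "\<And>(V'::'a set) E'. card V' < card V \<Longrightarrow> simple_graph V' E' \<Longrightarrow> sp V' E'
              \<Longrightarrow> int (card E') = 2 * int (card V') - 2 \<Longrightarrow> constructible V' E'"
    and inf: "infinite (UNIV :: 'a set)"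
begin

lemma fV: "finite V" using sg unfolding simple_graph_def by auto
lemma fE: "finite E" using sg_finE[OF sg] .

lemma edgeV: "e \<in> E \<Longrightarrow> e \<subseteq> V" using sg unfolding simple_graph_def by auto

lemma adjV: "{x, y} \<in> E \<Longrightarrow> x \<in> V \<and> y \<in> V" using edgeV by auto
lemma adj_ne: "{x, y} \<in> E \<Longrightarrow> x \<noteq> y" using sg unfolding simple_graph_def by force

lemma nb_iff: "y \<in> nbrs E x \<longleftrightarrow> {x, y} \<in> E" unfolding nbrs_def by (simp add: insert_commute)

lemma card_ge2: "card V \<ge> 2 \<Longrightarrow> u \<in> V \<Longrightarrow> card (nbrs E u) \<ge> 2"
proof -
  assume V2: "card V \<ge> 2" and u: "u \<in> V"
  define X where "X = V - {u}"
  have XV: "X \<subseteq> V" unfolding X_def by auto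
  have cX: "card X = card V - 1" unfolding X_def using u fV by simp
  hence Xne: "X \<noteq> {}" using V2 fV by auto
  have "ind E X = {e\<in>E. u \<notin> e}" unfolding ind_def X_def using edgeV by auto
  hence "card E = card (ind E X) + card (nbrs E u)" using card_split_at[OF sg, of u] by simp
  thus ?thesis using sp_le[OF s XV Xne] cX c V2 by linarith
qed

lemma ex_small: "card V \<ge> 2 \<Longrightarrow> \<exists>u\<in>V. card (nbrs E u) \<le> 3"
proof (rule ccontr)
  assume V2: "card V \<ge> 2" and "\<not> (\<exists>u\<in>V. card (nbrs E u) \<le> 3)"
  hence "\<forall>u\<in>V. 4 \<le> card (nbrs E u)" by auto
  hence "(\<Sum>u\<in>V. 4) \<le> (\<Sum>u\<in>V. card (nbrs E u))" by (intro sum_mono) auto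
  hence "4 * card V \<le> 2 * card E" using deg_sum[OF sg] by simp
  thus False using c by linarith
qed

definition V0 where "V0 u = V - {u}"
definition E0 where "E0 u = ind E (V - {u})"

lemma V0E0:
  assumes u: "u \<in> V"
  shows "simple_graph (V0 u) (E0 u)" "sp (V0 u) (E0 u)" "card (V0 u) = card V - 1"
    "card E = card (E0 u) + card (nbrs E u)" "E = E0 u \<union> (\<lambda>x. {u, x}) ` nbrs E u"
    "V = insert u (V0 u)" "u \<notin> V0 u" "\<And>x. x \<in> nbrs E u \<Longrightarrow> x \<in> V0 u"
    "\<And>e. e \<in> E0 u \<longleftrightarrow> e \<in> E \<and> u \<notin> e" "finite (V0 u)"
proof -
  show E0: "\<And>e. e \<in> E0 u \<longleftrightarrow> e \<in> E \<and> u \<notin> e" unfolding E0_def ind_def using edgeV by auto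
  show "simple_graph (V0 u) (E0 u)" using sg unfolding simple_graph_def V0_def E0_def ind_def by auto
  show "sp (V0 u) (E0 u)" by (rule sp_sub[OF sg s]) (auto simp: V0_def E0_def ind_def)
  show "card (V0 u) = card V - 1" unfolding V0_def using u fV by simp
  have "{e\<in>E. u \<notin> e} = E0 u" using E0 by auto
  thus "card E = card (E0 u) + card (nbrs E u)" using card_split_at[OF sg, of u] by simp
  show "E = E0 u \<union> (\<lambda>x. {u, x}) ` nbrs E u" using E0 edges_at[OF sg, of u] by auto
  show "V = insert u (V0 u)" "u \<notin> V0 u" using u unfolding V0_def by auto
  show "\<And>x. x \<in> nbrs E u \<Longrightarrow> x \<in> V0 u" using nbrs_V[OF sg] nbrs_not_self[OF sg] unfolding V0_def by auto
  show "finite (V0 u)" using fV unfolding V0_def by auto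
qed

lemma deg2:
  assumes u: "u \<in> V" and N: "nbrs E u = {a, b}" and ab: "a \<noteq> b"
  shows "constructible V E"
proof -
  note Z = V0E0[OF u]
  have cN: "card (nbrs E u) = 2" using N ab by simp
  have cV: "card (V0 u) < card V" using Z(3) u fV by (metis One_nat_def card_gt_0_iff diff_less empty_iff zero_less_one)
  have "int (card (E0 u)) = 2 * int (card (V0 u)) - 2" using Z(3,4) cN c cV by linarith
  hence con: "constructible (V0 u) (E0 u)" using IH[OF cV Z(1,2)] by blast
  have "a \<in> V0 u" "b \<in> V0 u" using Z(8) N by auto
  from constructible.henneberg1[OF con Z(7) this ab]
  have "constructible (insert u (V0 u)) (E0 u \<union> {{u, a}, {u, b}})" .
  moreover have "E0 u \<union> {{u, a}, {u, b}} = E" using Z(5) N by auto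
  ultimately show ?thesis using Z(6) by simp
qed

definition tset where "tset X \<longleftrightarrow> X \<subseteq> V \<and> X \<noteq> {} \<and> int (card (ind E X)) = 2 * int (card X) - 2"
definition blk where "blk u p q \<longleftrightarrow> (\<exists>X. tset X \<and> u \<notin> X \<and> p \<in> X \<and> q \<in> X)"

lemma tset_union: "tset X \<Longrightarrow> tset Y \<Longrightarrow> X \<inter> Y \<noteq> {} \<Longrightarrow> tset (X \<union> Y)"
proof -
  assume X: "tset X" and Y: "tset Y" and i: "X \<inter> Y \<noteq> {}"
  have a: "X \<union> Y \<subseteq> V" "X \<union> Y \<noteq> {}" using X Y unfolding tset_def by auto
  have "int (card (ind E (X \<union> Y))) \<ge> 2 * int (card (X \<union> Y)) - 2"
    using union_tight[OF sg s _ _ i] X Y unfolding tset_def by blast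
  moreover have "int (card (ind E (X \<union> Y))) \<le> 2 * int (card (X \<union> Y)) - 2" by (rule sp_le[OF s a])
  ultimately show ?thesis using a unfolding tset_def by linarith
qed

lemma add_vertex_int:
  assumes "w \<notin> X" "N \<subseteq> X" "finite N" "\<forall>y\<in>N. {w, y} \<in> E"
  shows "int (card (ind E (insert w X))) \<ge> int (card (ind E X)) + int (card N)"
  using add_vertex[OF sg assms] by linarith

lemma no_tset3:
  assumes u: "u \<in> V" and N: "nbrs E u = {p, q, r}" and X: "tset X" "u \<notin> X" "p \<in> X" "q \<in> X" "r \<in> X"
    and d: "p \<noteq> q" "p \<noteq> r" "q \<noteq> r"
  shows False
proof -
  have fX: "finite X" using X fV unfolding tset_def by (meson finite_subset)
  have "int (card (ind E (insert u X))) \<ge> int (card (ind E X)) + int (card {p, q, r})"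
    by (rule add_vertex_int) (use X N in \<open>auto simp: nb_iff\<close>)
  moreover have "card {p, q, r} = 3" using d by simp
  moreover have "card (insert u X) = card X + 1" using X fX by simp
  ultimately show False using violate[OF s, of "insert u X"] X u unfolding tset_def by auto
qed

lemma blocking:
  assumes u: "u \<in> V" and N: "nbrs E u = {p, q, r}" and d: "p \<noteq> q" "p \<noteq> r" "q \<noteq> r"
    and b: "blk u p q" and pr: "{p, r} \<in> E \<or> blk u p r" and qr: "{q, r} \<in> E \<or> blk u q r"
  shows False
proof -
  obtain X where X: "tset X" "u \<notin> X" "p \<in> X" "q \<in> X" using b unfolding blk_def by blast
  show False
  proof (cases "r \<in> X")
    case True thus False using no_tset3[OF u N X True d] by blast
  next
    case rX: False
    show False
    proof (cases "blk u p r")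
      case True
      then obtain Y where Y: "tset Y" "u \<notin> Y" "p \<in> Y" "r \<in> Y" unfolding blk_def by blast
      have "tset (X \<union> Y)" using tset_union[OF X(1) Y(1)] X Y by blast
      thus False using no_tset3[OF u N, of "X \<union> Y"] X Y d by blast
    next
      case nbpr: False
      show False
      proof (cases "blk u q r")
        case True
        then obtain Y where Y: "tset Y" "u \<notin> Y" "q \<in> Y" "r \<in> Y" unfolding blk_def by blast
        have "tset (X \<union> Y)" using tset_union[OF X(1) Y(1)] X Y by blast
        thus False using no_tset3[OF u N, of "X \<union> Y"] X Y d by blast
      next
        case False
        hence e: "{p, r} \<in> E" "{q, r} \<in> E" using pr qr nbpr by auto
        have fX: "finite X" using X fV unfolding tset_def by (meson finite_subset)
        have "int (card (ind E (insert r X))) \<ge> int (card (ind E X)) + int (card {p, q})"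
          by (rule add_vertex_int) (use X e rX in \<open>auto simp: insert_commute\<close>)
        moreover have "card {p, q} = 2" using d by simp
        moreover have "card (insert r X) = card X + 1" using rX fX by simp
        moreover have rV: "r \<in> V" using e adjV by auto
        ultimately have "tset (insert r X)"
          using sp_le[OF s, of "insert r X"] X unfolding tset_def by auto
        moreover have "r \<noteq> u" using N nbrs_not_self[OF sg, of u] by auto
        ultimately show False using no_tset3[OF u N, of "insert r X"] X d by blast
      qed
    qed
  qed
qed

lemma H2_red:
  assumes u: "u \<in> V" and N: "nbrs E u = {p, q, r}" and d: "p \<noteq> q" "p \<noteq> r" "q \<noteq> r"
    and npq: "{p, q} \<notin> E" and nb: "\<not> blk u p q"
  shows "constructible V E"
proof -
  note Z = V0E0[OF u]
  define E' where "E' = insert {p, q} (E0 u)"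
  have pqr: "p \<in> V0 u" "q \<in> V0 u" "r \<in> V0 u" using Z(8) N by auto
  have cN: "card (nbrs E u) = 3" using N d by simp
  have cV: "card (V0 u) < card V" using Z(3) u fV by (metis One_nat_def card_gt_0_iff diff_less empty_iff zero_less_one)
  have nE0: "{p, q} \<notin> E0 u" using Z(9) npq by blast
  have sg': "simple_graph (V0 u) E'" using Z(1) pqr d unfolding E'_def simple_graph_def by auto
  have sp': "sp (V0 u) E'" unfolding sp_def
  proof (intro allI impI)
    fix X assume X: "X \<subseteq> V0 u \<and> X \<noteq> {}"
    have XV: "X \<subseteq> V" "u \<notin> X" using X unfolding V0_def by auto
    have ind0: "ind (E0 u) X = ind E X" using XV Z(9) unfolding ind_def by auto
    show "int (card (ind E' X)) \<le> 2 * int (card X) - 2"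
    proof (cases "p \<in> X \<and> q \<in> X")
      case True
      hence "ind E' X = insert {p, q} (ind E X)" using ind0 unfolding E'_def ind_def by auto
      moreover have "{p, q} \<notin> ind E X" using npq unfolding ind_def by auto
      ultimately have "card (ind E' X) = card (ind E X) + 1" using sg_fin_ind[OF sg, of X] by simp
      moreover have "int (card (ind E X)) \<noteq> 2 * int (card X) - 2"
        using nb True XV X unfolding blk_def tset_def by blast
      ultimately show ?thesis using sp_le[OF s XV(1)] X by linarith
    next
      case False
      hence "ind E' X = ind E X" using ind0 unfolding E'_def ind_def by auto
      thus ?thesis using sp_le[OF s XV(1)] X by simp
    qed
  qed
  have "card E' = card (E0 u) + 1" unfolding E'_def using nE0 sg_finE[OF Z(1)] by simp
  hence "int (card E') = 2 * int (card (V0 u)) - 2" using Z(3,4) cN c cV by linarith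
  hence con: "constructible (V0 u) E'" using IH[OF cV sg' sp'] by blast
  have "{p, q} \<in> E'" unfolding E'_def by simp
  from constructible.henneberg2[OF con Z(7) this pqr(3) d]
  have "constructible (insert u (V0 u)) ((E' - {{p, q}}) \<union> {{u, p}, {u, q}, {u, r}})" .
  moreover have "E' - {{p, q}} = E0 u" unfolding E'_def using nE0 by auto
  moreover have "E0 u \<union> {{u, p}, {u, q}, {u, r}} = E" using Z(5) N by auto
  ultimately show ?thesis using Z(6) by simp
qed

lemma no_tset_rx:
  assumes u: "u \<in> V" and N: "nbrs E u = {p, q, r}" and d: "p \<noteq> q" "p \<noteq> r" "q \<noteq> r"
    and e: "{p, q} \<in> E" "{p, r} \<in> E" "{q, r} \<in> E" "{x, p} \<in> E" "{x, q} \<in> E"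
    and x: "x \<noteq> u" "x \<noteq> p" "x \<noteq> q" "x \<noteq> r"
    and X: "tset X" "u \<notin> X" "r \<in> X" "x \<in> X"
  shows False
proof -
  have fX: "finite X" using X fV unfolding tset_def by (meson finite_subset)
  have XV: "X \<subseteq> V" "X \<noteq> {}" using X unfolding tset_def by auto
  have tX: "int (card (ind E X)) = 2 * int (card X) - 2" using X unfolding tset_def by auto
  have pV: "p \<in> V" "q \<in> V" using e adjV by auto
  have up: "u \<noteq> p" "u \<noteq> q" "u \<noteq> r" using N nbrs_not_self[OF sg, of u] by auto
  show False
  proof (cases "p \<in> X"; cases "q \<in> X")
    assume a: "p \<in> X" "q \<in> X"
    have "int (card (ind E (insert u X))) \<ge> int (card (ind E X)) + int (card {p, q, r})"
      by (rule add_vertex_int) (use X N a in \<open>auto simp: nb_iff\<close>)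
    moreover have "card {p, q, r} = 3" using d by simp
    moreover have "card (insert u X) = card X + 1" using X fX by simp
    ultimately show False using violate[OF s, of "insert u X"] XV u tX by auto
  next
    assume a: "p \<in> X" "q \<notin> X"
    have "int (card (ind E (insert q X))) \<ge> int (card (ind E X)) + int (card {r, x, p})"
      by (rule add_vertex_int) (use X a e in \<open>auto simp: insert_commute\<close>)
    moreover have "card {r, x, p} = 3" using d x by auto
    moreover have "card (insert q X) = card X + 1" using a fX by simp
    ultimately show False using violate[OF s, of "insert q X"] XV pV tX by auto
  next
    assume a: "p \<notin> X" "q \<in> X"
    have "int (card (ind E (insert p X))) \<ge> int (card (ind E X)) + int (card {r, x, q})"
      by (rule add_vertex_int) (use X a e in \<open>auto simp: insert_commute\<close>)
    moreover have "card {r, x, q} = 3" using d x by auto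
    moreover have "card (insert p X) = card X + 1" using a fX by simp
    ultimately show False using violate[OF s, of "insert p X"] XV pV tX by auto
  next
    assume a: "p \<notin> X" "q \<notin> X"
    have "int (card (ind E (insert p X))) \<ge> int (card (ind E X)) + int (card {r, x})"
      by (rule add_vertex_int) (use X a e in \<open>auto simp: insert_commute\<close>)
    moreover have "int (card (ind E (insert q (insert p X)))) \<ge> int (card (ind E (insert p X))) + int (card {r, x, p})"
      by (rule add_vertex_int) (use X a e d in \<open>auto simp: insert_commute\<close>)
    moreover have "card {r, x} = 2" "card {r, x, p} = 3" using d x by auto
    moreover have "card (insert q (insert p X)) = card X + 2" using a fX d by simp
    ultimately show False using violate[OF s, of "insert q (insert p X)"] XV pV tX by auto
  qed
qed

lemma C4_red:
  assumes u: "u \<in> V" and N: "nbrs E u = {p, q, r}" and d: "p \<noteq> q" "p \<noteq> r" "q \<noteq> r"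
    and e: "{p, q} \<in> E" "{p, r} \<in> E" "{q, r} \<in> E" "{x, p} \<in> E" "{x, q} \<in> E"
    and xr: "{x, r} \<notin> E"
    and x: "x \<noteq> u" "x \<noteq> p" "x \<noteq> q" "x \<noteq> r"
  shows "constructible V E"
proof -
  note Z = V0E0[OF u]
  define E' where "E' = insert {r, x} (E0 u)"
  have pqr: "p \<in> V0 u" "q \<in> V0 u" "r \<in> V0 u" using Z(8) N by auto
  have xV: "x \<in> V0 u" using e adjV x unfolding V0_def by auto
  have cN: "card (nbrs E u) = 3" using N d by simp
  have cV: "card (V0 u) < card V" using Z(3) u fV by (metis One_nat_def card_gt_0_iff diff_less empty_iff zero_less_one)
  have nE0: "{r, x} \<notin> E0 u" using Z(9) xr by (auto simp: insert_commute)
  have sg': "simple_graph (V0 u) E'" using Z(1) pqr xV x unfolding E'_def simple_graph_def by auto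
  have sp': "sp (V0 u) E'" unfolding sp_def
  proof (intro allI impI)
    fix X assume X: "X \<subseteq> V0 u \<and> X \<noteq> {}"
    have XV: "X \<subseteq> V" "u \<notin> X" using X unfolding V0_def by auto
    have ind0: "ind (E0 u) X = ind E X" using XV Z(9) unfolding ind_def by auto
    show "int (card (ind E' X)) \<le> 2 * int (card X) - 2"
    proof (cases "r \<in> X \<and> x \<in> X")
      case True
      hence "ind E' X = insert {r, x} (ind E X)" using ind0 unfolding E'_def ind_def by auto
      moreover have "{r, x} \<notin> ind E X" using xr unfolding ind_def by (auto simp: insert_commute)
      ultimately have "card (ind E' X) = card (ind E X) + 1" using sg_fin_ind[OF sg, of X] by simp
      moreover have "int (card (ind E X)) \<noteq> 2 * int (card X) - 2"
      proof
        assume "int (card (ind E X)) = 2 * int (card X) - 2"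
        hence "tset X" using XV X unfolding tset_def by auto
        thus False using no_tset_rx[OF u N d e x] XV True by blast
      qed
      ultimately show ?thesis using sp_le[OF s XV(1)] X by linarith
    next
      case False
      hence "ind E' X = ind E X" using ind0 unfolding E'_def ind_def by auto
      thus ?thesis using sp_le[OF s XV(1)] X by simp
    qed
  qed
  have "card E' = card (E0 u) + 1" unfolding E'_def using nE0 sg_finE[OF Z(1)] by simp
  hence "int (card E') = 2 * int (card (V0 u)) - 2" using Z(3,4) cN c cV by linarith
  hence con: "constructible (V0 u) E'" using IH[OF cV sg' sp'] by blast
  have up: "u \<noteq> p" "u \<noteq> q" using N nbrs_not_self[OF sg, of u] by auto
  have "{x, p} \<in> E0 u" "{x, q} \<in> E0 u" using Z(9) e x up by auto
  hence "{p, x} \<in> E'" "{q, x} \<in> E'" unfolding E'_def by (simp_all add: insert_commute)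
  hence n1: "p \<in> nbrs E' x" "q \<in> nbrs E' x" unfolding nbrs_def by auto
  have "{r, x} \<in> E'" unfolding E'_def by simp
  hence n2: "{r} \<subseteq> nbrs E' x - {p, q}" using d unfolding nbrs_def by auto
  from constructible.vertex_to_4cycle[OF con xV n1 d(1) Z(7) n2]
  have "constructible (insert u (V0 u))
     ((E' - {{y, x} | y. y \<in> {r}}) \<union> {{y, u} | y. y \<in> {r}} \<union> {{u, p}, {u, q}})" .
  moreover have "(E' - {{y, x} | y. y \<in> {r}}) \<union> {{y, u} | y. y \<in> {r}} \<union> {{u, p}, {u, q}} = E"
  proof -
    have "E' - {{y, x} | y. y \<in> {r}} = E0 u" unfolding E'_def using nE0 by auto
    moreover have "{{y, u} | y. y \<in> {r}} = {{u, r}}" by (auto simp: insert_commute)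
    ultimately show ?thesis using Z(5) N by auto
  qed
  ultimately show ?thesis using Z(6) by simp
qed

lemma K4_red:
  assumes u: "u \<in> V" and N: "nbrs E u = {a, b, c}" and d: "a \<noteq> b" "a \<noteq> c" "b \<noteq> c"
    and e: "{a, b} \<in> E" "{a, c} \<in> E" "{b, c} \<in> E"
    and uniq: "\<forall>x\<in>V - {u, a, b, c}. \<forall>k1\<in>{u, a, b, c}. \<forall>k2\<in>{u, a, b, c}.
                 {x, k1} \<in> E \<and> {x, k2} \<in> E \<longrightarrow> k1 = k2"
  shows "constructible V E"
proof -
  define K where "K = {u, a, b, c}"
  have uabc: "u \<noteq> a" "u \<noteq> b" "u \<noteq> c" using N nbrs_not_self[OF sg, of u] by auto
  have eu: "{u, a} \<in> E" "{u, b} \<in> E" "{u, c} \<in> E" using N nb_iff by auto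
  have KV: "K \<subseteq> V" unfolding K_def using u eu adjV by auto
  have cK: "card K = 4" unfolding K_def using d uabc by simp
  have fK: "finite K" unfolding K_def by simp
  have Kpairs: "\<And>k1 k2. k1 \<in> K \<Longrightarrow> k2 \<in> K \<Longrightarrow> k1 \<noteq> k2 \<Longrightarrow> {k1, k2} \<in> E"
    unfolding K_def using e eu by (auto simp: insert_commute)
  have indK: "ind E K = {e. e \<subseteq> K \<and> card e = 2}"
  proof
    show "ind E K \<subseteq> {e. e \<subseteq> K \<and> card e = 2}" using sg unfolding ind_def simple_graph_def by auto
    show "{e. e \<subseteq> K \<and> card e = 2} \<subseteq> ind E K"
    proof
      fix e assume "e \<in> {e. e \<subseteq> K \<and> card e = 2}"
      then obtain k1 k2 where "e = {k1, k2}" "k1 \<noteq> k2" "k1 \<in> K" "k2 \<in> K" by (auto simp: card_2_iff)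
      thus "e \<in> ind E K" using Kpairs unfolding ind_def by auto
    qed
  qed
  have cindK: "card (ind E K) = 6" unfolding indK using n_subsets[OF fK, of 2] cK by (simp add: numeral_eq_Suc)
  obtain w where w: "w \<notin> V" using ex_new_if_finite[OF inf fV] by blast
  define R where "R = V - K"
  have fR: "finite R" unfolding R_def using fV by auto
  have uniqK: "\<forall>x\<in>R. \<forall>k1\<in>K. \<forall>k2\<in>K. {x, k1} \<in> E \<and> {x, k2} \<in> E \<longrightarrow> k1 = k2"
    using uniq unfolding R_def K_def .
  define M where "M = {x\<in>R. \<exists>k\<in>K. {x, k} \<in> E}"
  define f where "f = (\<lambda>x. THE k. k \<in> K \<and> {x, k} \<in> E)"
  have fM: "\<And>x. x \<in> M \<Longrightarrow> f x \<in> K \<and> {x, f x} \<in> E"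
  proof -
    fix x assume x: "x \<in> M"
    then obtain k where k: "k \<in> K" "{x, k} \<in> E" unfolding M_def by auto
    have xR: "x \<in> R" using x unfolding M_def by auto
    have "f x = k" unfolding f_def
    proof (rule the_equality)
      show "k \<in> K \<and> {x, k} \<in> E" using k by simp
    next
      fix k' assume "k' \<in> K \<and> {x, k'} \<in> E"
      thus "k' = k" using uniqK xR k by blast
    qed
    thus "f x \<in> K \<and> {x, f x} \<in> E" using k by simp
  qed
  have fM2: "\<And>x k. x \<in> R \<Longrightarrow> k \<in> K \<Longrightarrow> {x, k} \<in> E \<Longrightarrow> x \<in> M \<and> f x = k"
  proof -
    fix x k assume xk: "x \<in> R" "k \<in> K" "{x, k} \<in> E"
    hence xM: "x \<in> M" unfolding M_def by auto
    have "f x \<in> K" "{x, f x} \<in> E" using fM[OF xM] by auto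
    hence "f x = k" using uniqK xk by blast
    thus "x \<in> M \<and> f x = k" using xM by simp
  qed
  have MR: "M \<subseteq> R" unfolding M_def by auto
  have fMf: "finite M" using MR fR finite_subset by auto
  have RK: "R \<inter> K = {}" unfolding R_def by auto
  have wK: "w \<notin> K" "w \<notin> R" using w KV unfolding R_def by auto
  define V' where "V' = insert w R"
  define E' where "E' = ind E R \<union> (\<lambda>x. {x, w}) ` M"
  have injf: "\<And>A. A \<subseteq> R \<Longrightarrow> inj_on (\<lambda>x. {x, f x}) (M \<inter> A)"
  proof -
    fix A assume "A \<subseteq> R"
    show "inj_on (\<lambda>x. {x, f x}) (M \<inter> A)"
    proof (rule inj_onI)
      fix x y assume xy: "x \<in> M \<inter> A" "y \<in> M \<inter> A" "{x, f x} = {y, f y}"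
      have "x \<notin> K" "y \<notin> K" "f x \<in> K" "f y \<in> K" using xy fM MR RK by auto
      thus "x = y" using xy(3) by (metis doubleton_eq_iff)
    qed
  qed
  have dec: "E = ind E R \<union> ind E K \<union> (\<lambda>x. {x, f x}) ` M"
  proof
    show "E \<subseteq> ind E R \<union> ind E K \<union> (\<lambda>x. {x, f x}) ` M"
    proof
      fix e assume eE: "e \<in> E"
      then obtain s t where st: "e = {s, t}" "s \<noteq> t" "s \<in> V" "t \<in> V" using sg_edge[OF sg] by blast
      consider "s \<in> K" "t \<in> K" | "s \<notin> K" "t \<notin> K" | "s \<notin> K" "t \<in> K" | "s \<in> K" "t \<notin> K" by blast
      thus "e \<in> ind E R \<union> ind E K \<union> (\<lambda>x. {x, f x}) ` M"
      proof cases
        case 1 thus ?thesis using eE st unfolding ind_def by auto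
      next
        case 2 thus ?thesis using eE st unfolding ind_def R_def by auto
      next
        case 3
        hence "s \<in> M \<and> f s = t" using fM2[of s t] eE st unfolding R_def by auto
        thus ?thesis using st by auto
      next
        case 4
        hence "t \<in> M \<and> f t = s" using fM2[of t s] eE st unfolding R_def by (auto simp: insert_commute)
        thus ?thesis using st by (auto simp: insert_commute)
      qed
    qed
    show "ind E R \<union> ind E K \<union> (\<lambda>x. {x, f x}) ` M \<subseteq> E" using fM unfolding ind_def by auto
  qed
  have disj: "\<And>A. A \<subseteq> R \<Longrightarrow> ind E A \<inter> ind E K = {} \<and> (ind E A \<union> ind E K) \<inter> (\<lambda>x. {x, f x}) ` (M \<inter> A) = {}"
  proof -
    fix A assume A: "A \<subseteq> R"
    have "ind E A \<inter> ind E K = {}"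
    proof (rule ccontr)
      assume "ind E A \<inter> ind E K \<noteq> {}"
      then obtain e where "e \<in> E" "e \<subseteq> A" "e \<subseteq> K" unfolding ind_def by auto
      moreover hence "e \<noteq> {}" using sg unfolding simple_graph_def by force
      ultimately show False using A RK by blast
    qed
    moreover have "(ind E A \<union> ind E K) \<inter> (\<lambda>x. {x, f x}) ` (M \<inter> A) = {}"
    proof (rule ccontr)
      assume "(ind E A \<union> ind E K) \<inter> (\<lambda>x. {x, f x}) ` (M \<inter> A) \<noteq> {}"
      then obtain x where x: "x \<in> M \<inter> A" "{x, f x} \<subseteq> A \<or> {x, f x} \<subseteq> K" unfolding ind_def by auto
      have "x \<notin> K" "f x \<in> K" using x fM MR RK by auto
      thus False using x A RK by auto
    qed
    ultimately show "ind E A \<inter> ind E K = {} \<and> (ind E A \<union> ind E K) \<inter> (\<lambda>x. {x, f x}) ` (M \<inter> A) = {}" ..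
  qed
  have card3: "\<And>A. A \<subseteq> R \<Longrightarrow> card (ind E A \<union> ind E K \<union> (\<lambda>x. {x, f x}) ` (M \<inter> A)) = card (ind E A) + 6 + card (M \<inter> A)"
  proof -
    fix A assume A: "A \<subseteq> R"
    have fA: "finite (ind E A)" "finite (ind E K)" using sg_fin_ind[OF sg] by auto
    have fI: "finite ((\<lambda>x. {x, f x}) ` (M \<inter> A))" using fMf by auto
    have "card (ind E A \<union> ind E K \<union> (\<lambda>x. {x, f x}) ` (M \<inter> A))
        = card (ind E A \<union> ind E K) + card ((\<lambda>x. {x, f x}) ` (M \<inter> A))"
      using card_Un_disjoint[OF _ fI] fA disj[OF A] by simp
    also have "card (ind E A \<union> ind E K) = card (ind E A) + 6"
      using card_Un_disjoint[OF fA] disj[OF A] cindK by simp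
    also have "card ((\<lambda>x. {x, f x}) ` (M \<inter> A)) = card (M \<inter> A)" by (rule card_image[OF injf[OF A]])
    finally show "card (ind E A \<union> ind E K \<union> (\<lambda>x. {x, f x}) ` (M \<inter> A)) = card (ind E A) + 6 + card (M \<inter> A)" .
  qed
  have cE: "card E = card (ind E R) + 6 + card M"
  proof -
    have "M \<inter> R = M" using MR by auto
    thus ?thesis using card3[of R] dec by simp
  qed
  have sg': "simple_graph V' E'"
    unfolding simple_graph_def
  proof (rule conjI[OF _ ballI])
    show "finite V'" unfolding V'_def using fR by simp
    fix e assume "e \<in> E'"
    hence "e \<in> ind E R \<or> (\<exists>x\<in>M. e = {x, w})" unfolding E'_def by auto
    thus "e \<subseteq> V' \<and> card e = 2"
    proof
      assume "e \<in> ind E R" thus ?thesis using sg unfolding ind_def V'_def simple_graph_def by auto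
    next
      assume "\<exists>x\<in>M. e = {x, w}"
      then obtain x where x: "x \<in> M" "e = {x, w}" by blast
      have "x \<noteq> w" using x MR wK by auto
      thus ?thesis using x MR unfolding V'_def by auto
    qed
  qed
  have wE': "\<And>e. e \<in> E' \<Longrightarrow> w \<notin> e \<Longrightarrow> e \<in> ind E R" unfolding E'_def by auto
  have sp': "sp V' E'" unfolding sp_def
  proof (intro allI impI)
    fix X assume X: "X \<subseteq> V' \<and> X \<noteq> {}"
    show "int (card (ind E' X)) \<le> 2 * int (card X) - 2"
    proof (cases "w \<in> X")
      case False
      hence XR: "X \<subseteq> R" using X unfolding V'_def by auto
      hence XV: "X \<subseteq> V" unfolding R_def by auto
      have "ind E' X \<subseteq> ind E X" using False wE' unfolding ind_def by auto
      hence "card (ind E' X) \<le> card (ind E X)" by (rule card_mono[OF sg_fin_ind[OF sg]])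
      thus ?thesis using sp_le[OF s XV] X by linarith
    next
      case True
      define X0 where "X0 = X - {w}"
      have X0: "X0 \<subseteq> R" "w \<notin> X0" "X = insert w X0" using X True unfolding X0_def V'_def by auto
      have fX0: "finite X0" using X0 fR finite_subset by auto
      have sub: "ind E' X \<subseteq> ind E X0 \<union> (\<lambda>x. {x, w}) ` (M \<inter> X0)"
      proof
        fix e assume e: "e \<in> ind E' X"
        show "e \<in> ind E X0 \<union> (\<lambda>x. {x, w}) ` (M \<inter> X0)"
        proof (cases "w \<in> e")
          case False
          hence "e \<in> ind E R" using wE' e unfolding ind_def by auto
          thus ?thesis using e False unfolding ind_def X0_def by auto
        next
          case True
          hence "e \<in> (\<lambda>x. {x, w}) ` M" using e wK unfolding E'_def ind_def R_def by auto
          then obtain x where x: "x \<in> M" "e = {x, w}" by auto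
          have "x \<in> X0" using e x MR wK unfolding ind_def X0_def by auto
          thus ?thesis using x by auto
        qed
      qed
      have "card (ind E' X) \<le> card (ind E X0 \<union> (\<lambda>x. {x, w}) ` (M \<inter> X0))"
        by (rule card_mono[OF _ sub]) (simp add: sg_fin_ind[OF sg] fMf)
      also have "\<dots> \<le> card (ind E X0) + card ((\<lambda>x. {x, w}) ` (M \<inter> X0))" by (rule card_Un_le)
      also have "card ((\<lambda>x. {x, w}) ` (M \<inter> X0)) \<le> card (M \<inter> X0)" by (rule card_image_le) (simp add: fMf)
      finally have cb: "card (ind E' X) \<le> card (ind E X0) + card (M \<inter> X0)" by simp
      define Y where "Y = X0 \<union> K"
      have Y: "Y \<subseteq> V" "Y \<noteq> {}" unfolding Y_def using X0 KV cK R_def by auto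
      have "ind E X0 \<union> ind E K \<union> (\<lambda>x. {x, f x}) ` (M \<inter> X0) \<subseteq> ind E Y"
        unfolding Y_def ind_def using fM by auto
      hence "card (ind E X0 \<union> ind E K \<union> (\<lambda>x. {x, f x}) ` (M \<inter> X0)) \<le> card (ind E Y)"
        by (rule card_mono[OF sg_fin_ind[OF sg]])
      hence "card (ind E X0) + 6 + card (M \<inter> X0) \<le> card (ind E Y)" using card3[OF X0(1)] by simp
      moreover have "card Y = card X0 + 4" unfolding Y_def using card_Un_disjoint[OF fX0 fK] X0 RK cK by auto
      moreover have "card X = card X0 + 1" using X0 fX0 by simp
      ultimately show ?thesis using cb sp_le[OF s Y] by linarith
    qed
  qed
  have cE': "card E' = card (ind E R) + card M"
  proof -
    have "ind E R \<inter> (\<lambda>x. {x, w}) ` M = {}" using w edgeV unfolding ind_def by auto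
    moreover have "card ((\<lambda>x. {x, w}) ` M) = card M"
      by (rule card_image, rule inj_at2) (use MR wK in auto)
    ultimately show ?thesis unfolding E'_def using card_Un_disjoint[OF sg_fin_ind[OF sg], of "(\<lambda>x. {x, w}) ` M" R] fMf
      by simp
  qed
  have cR: "card R = card V - 4" unfolding R_def using card_Diff_subset[OF fK KV] cK by simp
  have cV4: "card V \<ge> 4" using card_mono[OF fV KV] cK by simp
  have cV': "card V' = card V - 3" unfolding V'_def using cR wK fR cV4 by simp
  have ltV: "card V' < card V" using cV' cV4 by simp
  have "int (card E') = 2 * int (card V') - 2" using cE' cE c cV' cV4 by linarith
  hence con: "constructible V' E'" using IH[OF ltV sg' sp'] by blast
  have nw: "nbrs E' w = M"
  proof
    show "nbrs E' w \<subseteq> M"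
    proof
      fix y assume "y \<in> nbrs E' w"
      hence y: "{y, w} \<in> E'" unfolding nbrs_def by auto
      hence "{y, w} \<notin> ind E R" using w edgeV unfolding ind_def by auto
      then obtain x where "x \<in> M" "{y, w} = {x, w}" using y unfolding E'_def by auto
      moreover have "x \<noteq> w" using \<open>x \<in> M\<close> MR wK by auto
      ultimately show "y \<in> M" by (metis doubleton_eq_iff)
    qed
    show "M \<subseteq> nbrs E' w" unfolding nbrs_def E'_def by auto
  qed
  have wV': "w \<in> V'" unfolding V'_def by simp
  have KV': "K \<inter> V' = {}" unfolding V'_def R_def using wK by auto
  have fK': "\<forall>x\<in>nbrs E' w. f x \<in> K" using nw fM by auto
  from constructible.vertex_to_K4[OF con wV' KV' cK fK']
  have "constructible ((V' - {w}) \<union> K)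
     ({e\<in>E'. w \<notin> e} \<union> {{w1, w2} | w1 w2. w1 \<in> K \<and> w2 \<in> K \<and> w1 \<noteq> w2}
        \<union> {{x, f x} | x. x \<in> nbrs E' w})" .
  moreover have "(V' - {w}) \<union> K = V" unfolding V'_def R_def using wK KV w by auto
  moreover have "{e\<in>E'. w \<notin> e} \<union> {{w1, w2} | w1 w2. w1 \<in> K \<and> w2 \<in> K \<and> w1 \<noteq> w2}
        \<union> {{x, f x} | x. x \<in> nbrs E' w} = E"
  proof -
    have "{e\<in>E'. w \<notin> e} = ind E R" using wE' wK unfolding E'_def ind_def by auto
    moreover have "{{w1, w2} | w1 w2. w1 \<in> K \<and> w2 \<in> K \<and> w1 \<noteq> w2} = ind E K" unfolding pairs_eq indK ..
    moreover have "{{x, f x} | x. x \<in> nbrs E' w} = (\<lambda>x. {x, f x}) ` M" unfolding nw by auto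
    ultimately show ?thesis using dec by simp
  qed
  ultimately show ?thesis by simp
qed

lemma blk_sym: "blk u p q \<longleftrightarrow> blk u q p" unfolding blk_def by blast

lemma deg3:
  assumes u: "u \<in> V" and cN: "card (nbrs E u) = 3"
  shows "constructible V E"
proof -
  obtain a b c where N: "nbrs E u = {a, b, c}" and d: "a \<noteq> b" "b \<noteq> c" "a \<noteq> c"
    using cN by (auto simp: card_3_iff)
  have N2: "nbrs E u = {a, c, b}" "nbrs E u = {b, c, a}" using N by auto
  show ?thesis
  proof (cases "({a, b} \<notin> E \<and> \<not> blk u a b) \<or> ({a, c} \<notin> E \<and> \<not> blk u a c) \<or> ({b, c} \<notin> E \<and> \<not> blk u b c)")
    case True
    thus ?thesis
    proof (elim disjE conjE)
      assume "{a, b} \<notin> E" "\<not> blk u a b" thus ?thesis using H2_red[OF u N] d by blast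
    next
      assume "{a, c} \<notin> E" "\<not> blk u a c" thus ?thesis using H2_red[OF u N2(1)] d by blast
    next
      assume "{b, c} \<notin> E" "\<not> blk u b c" thus ?thesis using H2_red[OF u N2(2)] d by blast
    qed
  next
    case False
    hence ab: "{a, b} \<in> E \<or> blk u a b" and ac: "{a, c} \<in> E \<or> blk u a c" and bc: "{b, c} \<in> E \<or> blk u b c"
      by auto
    have ab': "{b, a} \<in> E \<or> blk u b a" and ac': "{c, a} \<in> E \<or> blk u c a" and bc': "{c, b} \<in> E \<or> blk u c b"
      using ab ac bc blk_sym by (auto simp: insert_commute)
    have "\<not> blk u a b" using blocking[OF u N d(1) d(3) d(2) _ ac bc] by blast
    moreover have "\<not> blk u a c" using blocking[OF u N2(1) d(3) d(1) d(2)[symmetric] _ ab bc'] by blast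
    moreover have "\<not> blk u b c" using blocking[OF u N2(2) d(2) d(1)[symmetric] d(3)[symmetric] _ ab' ac'] by blast
    ultimately have e: "{a, b} \<in> E" "{a, c} \<in> E" "{b, c} \<in> E" using ab ac bc by auto
    have uabc: "u \<noteq> a" "u \<noteq> b" "u \<noteq> c" using N nbrs_not_self[OF sg, of u] by auto
    have eu: "{u, a} \<in> E" "{u, b} \<in> E" "{u, c} \<in> E" using N nb_iff by auto
    show ?thesis
    proof (cases "\<forall>x\<in>V - {u, a, b, c}. \<forall>k1\<in>{u, a, b, c}. \<forall>k2\<in>{u, a, b, c}.
                 {x, k1} \<in> E \<and> {x, k2} \<in> E \<longrightarrow> k1 = k2")
      case True
      thus ?thesis using K4_red[OF u N d(1) d(3) d(2) e] by blast
    next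
      case False
      then obtain x k1 k2 where x: "x \<in> V" "x \<notin> {u, a, b, c}" and k: "k1 \<in> {u, a, b, c}" "k2 \<in> {u, a, b, c}"
        "{x, k1} \<in> E" "{x, k2} \<in> E" "k1 \<noteq> k2" by blast
      have xu: "{x, u} \<notin> E" using x N nb_iff[of x u] by (auto simp: insert_commute)
      hence k': "k1 \<in> {a, b, c}" "k2 \<in> {a, b, c}" using k by auto
      have not3: "\<not> ({x, a} \<in> E \<and> {x, b} \<in> E \<and> {x, c} \<in> E)"
      proof
        assume xa: "{x, a} \<in> E \<and> {x, b} \<in> E \<and> {x, c} \<in> E"
        have "{{a, b}, {a, c}, {b, c}} \<subseteq> ind E {a, b, c}" using e unfolding ind_def by auto
        hence "card {{a, b}, {a, c}, {b, c}} \<le> card (ind E {a, b, c})"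
          by (rule card_mono[OF sg_fin_ind[OF sg]])
        moreover have "card {{a, b}, {a, c}, {b, c}} = 3"
        proof -
          have "{a, b} \<noteq> {a, c}" "{a, b} \<noteq> {b, c}" "{a, c} \<noteq> {b, c}" using d by (simp_all add: doubleton_eq_iff)
          thus ?thesis by simp
        qed
        moreover have "int (card (ind E (insert u {a, b, c}))) \<ge> int (card (ind E {a, b, c})) + int (card {a, b, c})"
          by (rule add_vertex_int) (use uabc eu in auto)
        moreover have "int (card (ind E (insert x (insert u {a, b, c})))) \<ge> int (card (ind E (insert u {a, b, c}))) + int (card {a, b, c})"
          by (rule add_vertex_int) (use x xa in auto)
        moreover have "card {a, b, c} = 3" using d by simp
        moreover have "card (insert x (insert u {a, b, c})) = 5" using d uabc x by auto
        moreover have "insert x (insert u {a, b, c}) \<subseteq> V" using x u e adjV by auto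
        ultimately show False using violate[OF s, of "insert x (insert u {a, b, c})"] by auto
      qed
      have xn: "x \<noteq> u" "x \<noteq> a" "x \<noteq> b" "x \<noteq> c" using x by auto
      consider "{x, a} \<in> E" "{x, b} \<in> E" | "{x, a} \<in> E" "{x, c} \<in> E" | "{x, b} \<in> E" "{x, c} \<in> E"
        using k' k(3,4,5) by auto
      thus ?thesis
      proof cases
        case 1
        hence "{x, c} \<notin> E" using not3 by auto
        thus ?thesis using C4_red[OF u N d(1) d(3) d(2) e 1] xn by blast
      next
        case 2
        hence "{x, b} \<notin> E" using not3 by auto
        moreover have "{c, b} \<in> E" using e by (simp add: insert_commute)
        ultimately show ?thesis using C4_red[OF u N2(1) d(3) d(1) d(2)[symmetric] e(2) e(1) _ 2] xn by blast
      next
        case 3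
        hence "{x, a} \<notin> E" using not3 by auto
        moreover have "{b, a} \<in> E" "{c, a} \<in> E" using e by (simp_all add: insert_commute)
        ultimately show ?thesis using C4_red[OF u N2(2) d(2) d(1)[symmetric] d(3)[symmetric] e(3) _ _ 3] xn by blast
      qed
    qed
  qed
qed

end

lemma hard:
  assumes inf: "infinite (UNIV :: 'a set)"
  shows "simple_graph (V :: 'a set) E \<Longrightarrow> sp V E \<Longrightarrow> int (card E) = 2 * int (card V) - 2 \<Longrightarrow> constructible V E"
proof (induction "card V" arbitrary: V E rule: less_induct)
  case less
  interpret red V E using less inf by unfold_locales auto
  show ?case
  proof (cases "card V \<ge> 2")
    case True
    obtain u where u: "u \<in> V" "card (nbrs E u) \<le> 3" using ex_small[OF True] by blast
    have "card (nbrs E u) \<ge> 2" using card_ge2[OF True u(1)] .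
    hence "card (nbrs E u) = 2 \<or> card (nbrs E u) = 3" using u by auto
    thus ?thesis
    proof
      assume "card (nbrs E u) = 2"
      then obtain a b where "nbrs E u = {a, b}" "a \<noteq> b" by (auto simp: card_2_iff)
      thus ?thesis using deg2[OF u(1)] by blast
    next
      assume "card (nbrs E u) = 3" thus ?thesis using deg3[OF u(1)] by blast
    qed
  next
    case False
    have "card V \<noteq> 0" using less.prems(3) by auto
    hence "card V = 1" using False by auto
    then obtain v where v: "V = {v}" by (auto simp: card_1_singleton_iff)
    have "E = ind E V" using ind_V[OF less.prems(1)] by simp
    also have "\<dots> = {}" using ind_single[OF less.prems(1)] v by simp
    finally show ?thesis using v constructible.K1 by simp
  qed
qed


theorem theorem3p1:
  fixes V :: "'a set" and E :: "'a set set"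
  assumes "infinite (UNIV :: 'a set)"
    and "simple_graph V E"
  shows "tight 2 2 V E \<longleftrightarrow> constructible V E"
proof
  assume "tight 2 2 V E"
  hence "sp V E" "int (card E) = 2 * int (card V) - 2" using tight_iff[OF assms(2)] by auto
  thus "constructible V E" using hard[OF assms(1) assms(2)] by blast
next
  assume "constructible V E"
  hence "simple_graph V E \<and> sp V E \<and> int (card E) = 2 * int (card V) - 2" by (rule constr_ok)
  thus "tight 2 2 V E" using tight_iff[OF assms(2)] by auto
qed

end
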